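(* Let $X$ be a collectionwise normal homogeneous space with $\operatorname{ind} X=0$ which has property $\mathcal D$. Then $X$ is strongly discrete homogeneous.
   Context: $X$ is homogeneous if for any $x,y\in X$ there is a homeomorphism $f\colon X\to X$ with $f(x)=y$. A space $X$ is collectionwise normal if it is $T_1$ and for every discrete family $\{F_s\}_{s\in S}$ of closed subsets there is a discrete family $\{V_s\}_{s\in S}$ of open sets with $F_s\subseteq V_s$. $\operatorname{ind}$ is the small inductive dimension. A Hausdorff space $X$ has property $\mathcal D$ if for any proper clopen subsets $F,G$ of $X$ that are homeomorphic, the subspaces $X\setminus F$ and $X\setminus G$ are also homeomorphic. A subset $D$ of $X$ is discrete if each point of $X$ has a neighbourhood containing at most one point of $D$. A Hausdorff space $X$ is strongly discrete homogeneous (sDH) if for any two discrete subsets $A,B$ and any bijection $f\colon A\to B$, $f$ extends to a homeomorphism of $X$ onto itself. *)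

theory Defs
  imports "HOL-Analysis.Analysis"
begin

definition homogeneous_space :: "'a topology \<Rightarrow> bool" where
  "homogeneous_space X \<longleftrightarrow>
     (\<forall>x\<in>topspace X. \<forall>y\<in>topspace X. \<exists>f. homeomorphic_map X X f \<and> f x = y)"

definition discrete_family :: "'a topology \<Rightarrow> 'i set \<Rightarrow> ('i \<Rightarrow> 'a set) \<Rightarrow> bool" where
  "discrete_family X S F \<longleftrightarrow>
     (\<forall>x\<in>topspace X. \<exists>W. openin X W \<and> x \<in> W \<and>
        (\<forall>s\<in>S. \<forall>t\<in>S. F s \<inter> W \<noteq> {} \<and> F t \<inter> W \<noteq> {} \<longrightarrow> s = t))"

text \<open>Discrete families are indexed by themselves (a set of subsets); this loses no
  generality.\<close>
definition collectionwise_normal :: "'a topology \<Rightarrow> bool" where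
  "collectionwise_normal X \<longleftrightarrow> t1_space X \<and>
     (\<forall>\<F>. (\<forall>F\<in>\<F>. closedin X F) \<and> discrete_family X \<F> id \<longrightarrow>
        (\<exists>V. (\<forall>F\<in>\<F>. openin X (V F) \<and> F \<subseteq> V F) \<and> discrete_family X \<F> V))"

text \<open>ind X = 0: X is nonempty and every point has arbitrarily small open
  neighbourhoods with empty boundary, i.e. clopen ones.\<close>
definition ind_zero :: "'a topology \<Rightarrow> bool" where
  "ind_zero X \<longleftrightarrow> topspace X \<noteq> {} \<and>
     (\<forall>x U. openin X U \<and> x \<in> U \<longrightarrow>
        (\<exists>V. openin X V \<and> closedin X V \<and> x \<in> V \<and> V \<subseteq> U))"

definition property_D :: "'a topology \<Rightarrow> bool" where
  "property_D X \<longleftrightarrow> Hausdorff_space X \<and>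
     (\<forall>F G. openin X F \<and> closedin X F \<and> F \<noteq> topspace X \<and>
            openin X G \<and> closedin X G \<and> G \<noteq> topspace X \<and>
            (subtopology X F homeomorphic_space subtopology X G) \<longrightarrow>
            (subtopology X (topspace X - F) homeomorphic_space subtopology X (topspace X - G)))"

definition discrete_subset :: "'a topology \<Rightarrow> 'a set \<Rightarrow> bool" where
  "discrete_subset X D \<longleftrightarrow> D \<subseteq> topspace X \<and>
     (\<forall>x\<in>topspace X. \<exists>W. openin X W \<and> x \<in> W \<and>
        (\<forall>a\<in>D. \<forall>b\<in>D. a \<in> W \<and> b \<in> W \<longrightarrow> a = b))"

definition sDH :: "'a topology \<Rightarrow> bool" where
  "sDH X \<longleftrightarrow> Hausdorff_space X \<and>
     (\<forall>A B f. discrete_subset X A \<and> discrete_subset X B \<and> bij_betw f A B \<longrightarrow>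
        (\<exists>h. homeomorphic_map X X h \<and> (\<forall>a\<in>A. h a = f a)))"

end

theory Submission imports Defs begin

lemma paste_homeo:
  fixes X :: "'a topology" and Y :: "'b topology"
  assumes PO: "\<And>i. i \<in> I \<Longrightarrow> openin X (P i)"
    and QO: "\<And>i. i \<in> I \<Longrightarrow> openin Y (Q i)"
    and PD: "\<And>i j. i \<in> I \<Longrightarrow> j \<in> I \<Longrightarrow> i \<noteq> j \<Longrightarrow> P i \<inter> P j = {}"
    and QD: "\<And>i j. i \<in> I \<Longrightarrow> j \<in> I \<Longrightarrow> i \<noteq> j \<Longrightarrow> Q i \<inter> Q j = {}"
    and PC: "topspace X \<subseteq> (\<Union>i\<in>I. P i)"
    and QC: "topspace Y \<subseteq> (\<Union>i\<in>I. Q i)"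
    and H: "\<And>i. i \<in> I \<Longrightarrow> homeomorphic_maps (subtopology X (P i)) (subtopology Y (Q i)) (\<phi> i) (\<psi> i)"
  shows "\<exists>f g. homeomorphic_maps X Y f g \<and> (\<forall>i\<in>I. \<forall>x\<in>P i. f x = \<phi> i x)"
proof -
  define f where "f x = \<phi> (SOME i. i \<in> I \<and> x \<in> P i) x" for x
  define g where "g y = \<psi> (SOME i. i \<in> I \<and> y \<in> Q i) y" for y
  have fP: "f x = \<phi> i x" if "i \<in> I" "x \<in> P i" for i x
  proof -
    have "(SOME i. i \<in> I \<and> x \<in> P i) = i"
      using that PD by (intro some_equality) auto
    then show ?thesis by (simp add: f_def)
  qed
  have gQ: "g y = \<psi> i y" if "i \<in> I" "y \<in> Q i" for i y
  proof -
    have "(SOME i. i \<in> I \<and> y \<in> Q i) = i"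
      using that QD by (intro some_equality) auto
    then show ?thesis by (simp add: g_def)
  qed
  have Psub: "P i \<subseteq> topspace X" if "i \<in> I" for i using PO[OF that] openin_subset by blast
  have Qsub: "Q i \<subseteq> topspace Y" if "i \<in> I" for i using QO[OF that] openin_subset by blast
  have cf: "continuous_map X Y f"
  proof (rule pasting_lemma[where T=P and f=\<phi> and I=I])
    fix i assume i: "i \<in> I"
    show "openin X (P i)" using PO[OF i] .
    show "continuous_map (subtopology X (P i)) Y (\<phi> i)"
      using H[OF i] unfolding homeomorphic_maps_def
      using continuous_map_into_fulltopology by blast
  next
    fix i j x assume "i \<in> I" "j \<in> I" "x \<in> topspace X \<inter> P i \<inter> P j"
    then show "\<phi> i x = \<phi> j x" using PD by blast
  next
    fix x assume "x \<in> topspace X"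
    then show "\<exists>j. j \<in> I \<and> x \<in> P j \<and> f x = \<phi> j x" using PC fP by blast
  qed
  have cg: "continuous_map Y X g"
  proof (rule pasting_lemma[where T=Q and f=\<psi> and I=I])
    fix i assume i: "i \<in> I"
    show "openin Y (Q i)" using QO[OF i] .
    show "continuous_map (subtopology Y (Q i)) X (\<psi> i)"
      using H[OF i] unfolding homeomorphic_maps_def
      using continuous_map_into_fulltopology by blast
  next
    fix i j x assume "i \<in> I" "j \<in> I" "x \<in> topspace Y \<inter> Q i \<inter> Q j"
    then show "\<psi> i x = \<psi> j x" using QD by blast
  next
    fix x assume "x \<in> topspace Y"
    then show "\<exists>j. j \<in> I \<and> x \<in> Q j \<and> g x = \<psi> j x" using QC gQ by blast
  qed
  have gf: "g (f x) = x" if x: "x \<in> topspace X" for x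
  proof -
    obtain i where i: "i \<in> I" "x \<in> P i" using PC x by blast
    have xt: "x \<in> topspace (subtopology X (P i))" using i x by simp
    have "\<phi> i x \<in> topspace (subtopology Y (Q i))"
      using H[OF i(1)] xt unfolding homeomorphic_maps_def
      by (meson continuous_map_image_subset_topspace image_subset_iff)
    then have "\<phi> i x \<in> Q i" by simp
    then show ?thesis using fP[OF i] gQ[OF i(1)] H[OF i(1)] xt
      unfolding homeomorphic_maps_def by simp
  qed
  have fg: "f (g y) = y" if y: "y \<in> topspace Y" for y
  proof -
    obtain i where i: "i \<in> I" "y \<in> Q i" using QC y by blast
    have yt: "y \<in> topspace (subtopology Y (Q i))" using i y by simp
    have "\<psi> i y \<in> topspace (subtopology X (P i))"
      using H[OF i(1)] yt unfolding homeomorphic_maps_def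
      by (meson continuous_map_image_subset_topspace image_subset_iff)
    then have "\<psi> i y \<in> P i" by simp
    then show ?thesis using gQ[OF i] fP[OF i(1)] H[OF i(1)] yt
      unfolding homeomorphic_maps_def by simp
  qed
  show ?thesis
    using cf cg gf fg fP unfolding homeomorphic_maps_def by blast
qed

lemma closedin_discrete_Union:
  assumes C: "\<And>i. i \<in> I \<Longrightarrow> closedin X (S i)"
    and D: "\<And>x. x \<in> topspace X \<Longrightarrow> \<exists>W. openin X W \<and> x \<in> W \<and>
              (\<forall>i\<in>I. \<forall>j\<in>I. S i \<inter> W \<noteq> {} \<and> S j \<inter> W \<noteq> {} \<longrightarrow> i = j)"
  shows "closedin X (\<Union>i\<in>I. S i)"
proof -
  have sub: "(\<Union>i\<in>I. S i) \<subseteq> topspace X" using C closedin_subset by blast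
  have "openin X (topspace X - (\<Union>i\<in>I. S i))"
  proof (subst openin_subopen, intro ballI)
    fix x assume x: "x \<in> topspace X - (\<Union>i\<in>I. S i)"
    have xX: "x \<in> topspace X" using x by blast
    obtain W where W: "openin X W" "x \<in> W"
      "\<forall>i\<in>I. \<forall>j\<in>I. S i \<inter> W \<noteq> {} \<and> S j \<inter> W \<noteq> {} \<longrightarrow> i = j"
      using D[OF xX] by blast
    show "\<exists>T. openin X T \<and> x \<in> T \<and> T \<subseteq> topspace X - (\<Union>i\<in>I. S i)"
    proof (cases "\<exists>j\<in>I. S j \<inter> W \<noteq> {}")
      case True
      then obtain j where j: "j \<in> I" "S j \<inter> W \<noteq> {}" by blast
      have "openin X (W - S j)" using W(1) C[OF j(1)] by (simp add: openin_diff)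
      moreover have "W - S j \<subseteq> topspace X - (\<Union>i\<in>I. S i)"
      proof
        fix y assume y: "y \<in> W - S j"
        have "y \<notin> S i" if i: "i \<in> I" for i
        proof
          assume "y \<in> S i"
          then have "S i \<inter> W \<noteq> {}" using y by blast
          then have "i = j" using W(3) i j by blast
          then show False using y \<open>y \<in> S i\<close> by blast
        qed
        then show "y \<in> topspace X - (\<Union>i\<in>I. S i)" using y openin_subset[OF W(1)] by blast
      qed
      moreover have "x \<in> W - S j" using x W(2) j(1) by blast
      ultimately show ?thesis by (intro exI[of _ "W - S j"]) (intro conjI; assumption)
    next
      case False
      then have "W \<subseteq> topspace X - (\<Union>i\<in>I. S i)" using openin_subset[OF W(1)] by blast
      then show ?thesis using W(1,2) by (intro exI[of _ W]) simp
    qed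
  qed
  then show ?thesis using sub by (simp add: closedin_def)
qed

lemma clopen_family:
  assumes cn: "collectionwise_normal X" and iz: "ind_zero X" and D: "discrete_subset X D"
  shows "\<exists>C. (\<forall>d\<in>D. openin X (C d) \<and> closedin X (C d) \<and> d \<in> C d) \<and>
    (\<forall>x\<in>topspace X. \<exists>W. openin X W \<and> x \<in> W \<and>
        (\<forall>d\<in>D. \<forall>e\<in>D. C d \<inter> W \<noteq> {} \<and> C e \<inter> W \<noteq> {} \<longrightarrow> d = e))"
proof -
  have t1: "t1_space X" using cn by (simp add: collectionwise_normal_def)
  define FF where "FF = (\<lambda>d. {d}) ` D"
  have Dsub: "D \<subseteq> topspace X" using D by (simp add: discrete_subset_def)
  have cl: "\<forall>F\<in>FF. closedin X F" using t1 Dsub by (auto simp: FF_def closedin_t1_singleton)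
  have df: "discrete_family X FF id"
    unfolding discrete_family_def
  proof
    fix x assume x: "x \<in> topspace X"
    obtain W where W: "openin X W" "x \<in> W" "\<forall>a\<in>D. \<forall>b\<in>D. a \<in> W \<and> b \<in> W \<longrightarrow> a = b"
      using D x unfolding discrete_subset_def by blast
    have "\<forall>s\<in>FF. \<forall>t\<in>FF. id s \<inter> W \<noteq> {} \<and> id t \<inter> W \<noteq> {} \<longrightarrow> s = t"
      using W(3) by (auto simp: FF_def)
    then show "\<exists>W. openin X W \<and> x \<in> W \<and> (\<forall>s\<in>FF. \<forall>t\<in>FF. id s \<inter> W \<noteq> {} \<and> id t \<inter> W \<noteq> {} \<longrightarrow> s = t)"
      using W(1,2) by blast
  qed
  obtain V where V: "\<forall>F\<in>FF. openin X (V F) \<and> F \<subseteq> V F" "discrete_family X FF V"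
    using cn cl df unfolding collectionwise_normal_def by blast
  have "\<exists>C. openin X C \<and> closedin X C \<and> d \<in> C \<and> C \<subseteq> V {d}" if d: "d \<in> D" for d
  proof -
    have "{d} \<in> FF" unfolding FF_def using d by blast
    then have "openin X (V {d})" "d \<in> V {d}" using V(1) by auto
    then show ?thesis using iz unfolding ind_zero_def by blast
  qed
  then have "\<forall>d\<in>D. \<exists>C. openin X C \<and> closedin X C \<and> d \<in> C \<and> C \<subseteq> V {d}" by blast
  then obtain C where C: "\<forall>d\<in>D. openin X (C d) \<and> closedin X (C d) \<and> d \<in> C d \<and> C d \<subseteq> V {d}"
    by (rule bchoice[elim_format]) blast
  show ?thesis
  proof (rule exI[of _ C], intro conjI)
    show "\<forall>d\<in>D. openin X (C d) \<and> closedin X (C d) \<and> d \<in> C d" using C by blast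
  next
    show "\<forall>x\<in>topspace X. \<exists>W. openin X W \<and> x \<in> W \<and> (\<forall>d\<in>D. \<forall>e\<in>D. C d \<inter> W \<noteq> {} \<and> C e \<inter> W \<noteq> {} \<longrightarrow> d = e)"
    proof
    fix x assume x: "x \<in> topspace X"
    have "\<exists>W. openin X W \<and> x \<in> W \<and> (\<forall>s\<in>FF. \<forall>t\<in>FF. V s \<inter> W \<noteq> {} \<and> V t \<inter> W \<noteq> {} \<longrightarrow> s = t)"
      using V(2) x unfolding discrete_family_def by (rule bspec)
    then obtain W where W: "openin X W" "x \<in> W" "\<forall>s\<in>FF. \<forall>t\<in>FF. V s \<inter> W \<noteq> {} \<and> V t \<inter> W \<noteq> {} \<longrightarrow> s = t"
      by (elim exE conjE)
    have "d = e" if "d \<in> D" "e \<in> D" "C d \<inter> W \<noteq> {}" "C e \<inter> W \<noteq> {}" for d e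
    proof -
      have "C d \<subseteq> V {d}" "C e \<subseteq> V {e}" using C that(1,2) by auto
      then have "V {d} \<inter> W \<noteq> {}" "V {e} \<inter> W \<noteq> {}" using that(3,4) by blast+
      moreover have "{d} \<in> FF" "{e} \<in> FF" unfolding FF_def using that(1,2) by blast+
      ultimately have "{d} = {e}" using W(3) by blast
      then show ?thesis by simp
    qed
    then show "\<exists>W. openin X W \<and> x \<in> W \<and> (\<forall>d\<in>D. \<forall>e\<in>D. C d \<inter> W \<noteq> {} \<and> C e \<inter> W \<noteq> {} \<longrightarrow> d = e)"
      using W(1,2) by blast
    qed
  qed
qed

lemma discrete_full:
  assumes pD: "property_D X" and A: "discrete_subset X A" and AT: "A = topspace X"
    and f: "bij_betw f A B" and BT: "B \<subseteq> topspace X"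
  shows "B = topspace X"
proof (rule ccontr)
  assume nB: "B \<noteq> topspace X"
  define T where "T = topspace X"
  have XD': "discrete_topology T = X"
    unfolding T_def discrete_topology_unique
  proof (intro conjI refl ballI)
    fix x assume x: "x \<in> topspace X"
    obtain W where W: "openin X W" "x \<in> W" "\<forall>a\<in>A. \<forall>b\<in>A. a \<in> W \<and> b \<in> W \<longrightarrow> a = b"
      using A x unfolding discrete_subset_def by blast
    have "W = {x}" using W openin_subset[OF W(1)] AT by blast
    then show "openin X {x}" using W(1) by simp
  qed
  then have XD: "X = discrete_topology T" by simp
  obtain q where q: "q \<in> T" "q \<notin> B" using nB BT T_def by blast
  then have "A \<noteq> {}" using AT T_def by blast
  then obtain a0 where a0: "a0 \<in> A" by blast
  have a0T: "a0 \<in> T" using a0 AT T_def by simp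
  have fa0: "f a0 \<in> B" using f a0 bij_betwE by blast
  define F where "F = T - {a0}"
  define G where "G = B - {f a0}"
  have FT: "F \<subseteq> T" and GT: "G \<subseteq> T" using BT T_def by (auto simp: F_def G_def)
  have top: "topspace X = T" using T_def by simp
  have opF: "openin X F" "closedin X F" "F \<noteq> topspace X"
    using FT a0T by (auto simp: XD F_def)
  have opG: "openin X G" "closedin X G" "G \<noteq> topspace X"
    using GT fa0 BT by (auto simp: XD G_def)
  have fF: "f ` F = G"
  proof -
    have "f ` A = B" using f by (simp add: bij_betw_def)
    moreover have "inj_on f A" using f by (simp add: bij_betw_def)
    ultimately show ?thesis using a0 AT T_def by (auto simp: F_def G_def inj_on_def)
  qed
  have gG: "inv_into A f ` G \<subseteq> F"
  proof
    fix x assume "x \<in> inv_into A f ` G"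
    then obtain y where y: "y \<in> G" "x = inv_into A f y" by blast
    have yB: "y \<in> f ` A" using y f by (auto simp: G_def bij_betw_def)
    have "x \<in> A" using y yB by (simp add: inv_into_into)
    moreover have "f x = y" using y yB by (simp add: f_inv_into_f)
    ultimately show "x \<in> F" using y AT T_def by (auto simp: F_def G_def)
  qed
  have "homeomorphic_maps (discrete_topology F) (discrete_topology G) f (inv_into A f)"
    unfolding homeomorphic_maps_def
  proof (intro conjI ballI)
    show "continuous_map (discrete_topology F) (discrete_topology G) f" using fF by auto
    show "continuous_map (discrete_topology G) (discrete_topology F) (inv_into A f)" using gG by auto
  next
    fix x assume "x \<in> topspace (discrete_topology F)"
    then have "x \<in> A" using AT T_def by (auto simp: F_def)
    then show "inv_into A f (f x) = x" using f by (simp add: bij_betw_def)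
  next
    fix y assume "y \<in> topspace (discrete_topology G)"
    then have "y \<in> f ` A" using f by (auto simp: G_def bij_betw_def)
    then show "f (inv_into A f y) = y" by (simp add: f_inv_into_f)
  qed
  then have "subtopology X F homeomorphic_space subtopology X G"
    using FT GT by (simp add: XD Int_absorb1 homeomorphic_maps_imp_homeomorphic_space)
  then have "subtopology X (topspace X - F) homeomorphic_space subtopology X (topspace X - G)"
    using pD opF opG unfolding property_D_def by blast
  moreover have "topspace X - F = {a0}" using a0T by (auto simp: top F_def)
  ultimately have hs: "discrete_topology {a0} homeomorphic_space discrete_topology (T - G)"
    using a0T by (simp add: XD Int_absorb1 Diff_subset)
  obtain f2 g2 where fg:  "\<And>y. y \<in> topspace (discrete_topology (T - G)) \<Longrightarrow> f2 (g2 y) = y"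
    and g2: "g2 \<in> topspace (discrete_topology (T - G)) \<rightarrow> topspace (discrete_topology {a0})"
    using homeomorphic_space_unfold[OF hs] by metis
  have q1: "q \<in> T - G" using q by (auto simp: G_def)
  have q2: "f a0 \<in> T - G" using fa0 BT T_def by (auto simp: G_def)
  have "g2 q = a0" "g2 (f a0) = a0" using g2 q1 q2 by auto
  then have "q = f a0" using fg q1 q2 by (metis topspace_discrete_topology)
  then show False using q fa0 by simp
qed

theorem mainTheorem5:
  fixes X :: "'a topology"
  assumes "collectionwise_normal X"
    and "homogeneous_space X"
    and "ind_zero X"
    and "property_D X"
  shows "sDH X"
proof -
  note cn = assms(1) and hom = assms(2) and iz = assms(3) and pD = assms(4)
  have Haus: "Hausdorff_space X" using pD by (simp add: property_D_def)
  have t1: "t1_space X" using cn by (simp add: collectionwise_normal_def)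
  show ?thesis unfolding sDH_def
  proof (intro conjI allI impI Haus)
    fix A B and f :: "'a \<Rightarrow> 'a"
    assume asm: "discrete_subset X A \<and> discrete_subset X B \<and> bij_betw f A B"
    then have dA: "discrete_subset X A" and dB: "discrete_subset X B" and bf: "bij_betw f A B" by auto
    have AX: "A \<subseteq> topspace X" using dA by (simp add: discrete_subset_def)
    have BX: "B \<subseteq> topspace X" using dB by (simp add: discrete_subset_def)
    have bfi: "bij_betw (inv_into A f) B A" using bf by (rule bij_betw_inv_into)
    show "\<exists>h. homeomorphic_map X X h \<and> (\<forall>a\<in>A. h a = f a)"
    proof (cases "A = topspace X \<or> B = topspace X")
      case True
      have AT: "A = topspace X" and BT: "B = topspace X"
      proof -
        show "A = topspace X"
        proof (cases "A = topspace X")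
          case False
          then have "B = topspace X" using True by simp
          then show ?thesis using discrete_full[OF pD dB _ bfi AX] by simp
        qed simp
        then show "B = topspace X" using discrete_full[OF pD dA _ bf BX] by simp
      qed
      have XD': "discrete_topology (topspace X) = X"
        unfolding discrete_topology_unique
      proof (intro conjI refl ballI)
        fix x assume x: "x \<in> topspace X"
        obtain W where W: "openin X W" "x \<in> W" "\<forall>a\<in>A. \<forall>b\<in>A. a \<in> W \<and> b \<in> W \<longrightarrow> a = b"
          using dA x unfolding discrete_subset_def by blast
        have "W = {x}" using W openin_subset[OF W(1)] AT by blast
        then show "openin X {x}" using W(1) by simp
      qed
      have fA: "f ` A = A" using bf AT BT by (simp add: bij_betw_def)
      have "homeomorphic_maps X X f (inv_into A f)"
        unfolding homeomorphic_maps_def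
      proof (intro conjI ballI)
        show "continuous_map X X f"
          using fA AT by (subst XD'[symmetric]) auto
        show "continuous_map X X (inv_into A f)"
          using bfi AT BT by (subst XD'[symmetric]) (auto simp: bij_betw_def)
      next
        fix x assume "x \<in> topspace X"
        then show "inv_into A f (f x) = x" using bf AT by (simp add: bij_betw_def)
      next
        fix y assume "y \<in> topspace X"
        then show "f (inv_into A f y) = y" using fA AT by (simp add: f_inv_into_f)
      qed
      then show ?thesis using homeomorphic_map_maps by blast
    next
      case False
      then obtain p q where p: "p \<in> topspace X" "p \<notin> A" and q: "q \<in> topspace X" "q \<notin> B"
        using AX BX by blast
      obtain C where C: "\<forall>d\<in>A. openin X (C d) \<and> closedin X (C d) \<and> d \<in> C d"
        and Cd: "\<forall>x\<in>topspace X. \<exists>W. openin X W \<and> x \<in> W \<and>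
           (\<forall>d\<in>A. \<forall>e\<in>A. C d \<inter> W \<noteq> {} \<and> C e \<inter> W \<noteq> {} \<longrightarrow> d = e)"
        using clopen_family[OF cn iz dA] by (elim exE conjE)
      obtain C' where C': "\<forall>d\<in>B. openin X (C' d) \<and> closedin X (C' d) \<and> d \<in> C' d"
        and C'd: "\<forall>x\<in>topspace X. \<exists>W. openin X W \<and> x \<in> W \<and>
           (\<forall>d\<in>B. \<forall>e\<in>B. C' d \<inter> W \<noteq> {} \<and> C' e \<inter> W \<noteq> {} \<longrightarrow> d = e)"
        using clopen_family[OF cn iz dB] by (elim exE conjE)
      have fAB: "f a \<in> B" if "a \<in> A" for a using bf that bij_betwE by blast
      have injf: "inj_on f A" using bf by (simp add: bij_betw_def)
      have "\<exists>k k'. homeomorphic_maps X X k k' \<and> k a = f a" if a: "a \<in> A" for a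
      proof -
        have "a \<in> topspace X" "f a \<in> topspace X" using a AX BX fAB by auto
        then obtain k where "homeomorphic_map X X k" "k a = f a"
          using hom unfolding homogeneous_space_def by blast
        then show ?thesis using homeomorphic_map_maps by metis
      qed
      then have "\<forall>a\<in>A. \<exists>k. \<exists>k'. homeomorphic_maps X X k k' \<and> k a = f a" by blast
      then obtain H where "\<forall>a\<in>A. \<exists>k'. homeomorphic_maps X X (H a) k' \<and> H a a = f a"
        by (rule bchoice[elim_format]) blast
      then obtain Hi where H: "\<forall>a\<in>A. homeomorphic_maps X X (H a) (Hi a) \<and> H a a = f a"
        by (rule bchoice[elim_format]) blast
      have Hm: "homeomorphic_map X X (H a)" if "a \<in> A" for a
        using H that homeomorphic_map_maps by blast
      have "\<exists>U. openin X U \<and> closedin X U \<and> a \<in> U \<and> U \<subseteq> (C a - {p}) \<inter> {x \<in> topspace X. H a x \<in> C' (f a) - {q}}"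
        if a: "a \<in> A" for a
      proof -
        have o1: "openin X (C a - {p})" using C a p t1 by (simp add: openin_diff closedin_t1_singleton)
        have "openin X (C' (f a) - {q})" using C' fAB[OF a] q t1 by (simp add: openin_diff closedin_t1_singleton)
        then have o2: "openin X {x \<in> topspace X. H a x \<in> C' (f a) - {q}}"
          using Hm[OF a] homeomorphic_imp_continuous_map openin_continuous_map_preimage by blast
        have "a \<in> (C a - {p}) \<inter> {x \<in> topspace X. H a x \<in> C' (f a) - {q}}"
          using a p q C C' fAB[OF a] H AX by auto
        then show ?thesis using iz o1 o2 unfolding ind_zero_def by (meson openin_Int)
      qed
      then have "\<forall>a\<in>A. \<exists>U. openin X U \<and> closedin X U \<and> a \<in> U \<and> U \<subseteq> (C a - {p}) \<inter> {x \<in> topspace X. H a x \<in> C' (f a) - {q}}"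
        by blast
      then obtain U where U: "\<forall>a\<in>A. openin X (U a) \<and> closedin X (U a) \<and> a \<in> U a \<and> U a \<subseteq> (C a - {p}) \<inter> {x \<in> topspace X. H a x \<in> C' (f a) - {q}}"
        by (rule bchoice[elim_format]) blast
      define V where "V a = H a ` U a" for a
      have Uo: "openin X (U a)" "closedin X (U a)" "U a \<subseteq> C a" "p \<notin> U a" "U a \<subseteq> topspace X" "a \<in> U a"
        if "a \<in> A" for a using U that by auto
      have Vs: "V a \<subseteq> C' (f a)" "q \<notin> V a" if "a \<in> A" for a using U that by (auto simp: V_def)
      have Vo: "openin X (V a)" "closedin X (V a)" if a: "a \<in> A" for a
        using homeomorphic_map_openness[OF Hm[OF a] Uo(5)[OF a]] homeomorphic_map_closedness[OF Hm[OF a] Uo(5)[OF a]]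
          Uo[OF a] by (auto simp: V_def)
      have VX: "V a \<subseteq> topspace X" if "a \<in> A" for a using Vo[OF that] openin_subset by blast
      have Udisc: "\<exists>W. openin X W \<and> x \<in> W \<and> (\<forall>i\<in>A. \<forall>j\<in>A. U i \<inter> W \<noteq> {} \<and> U j \<inter> W \<noteq> {} \<longrightarrow> i = j)"
        if x: "x \<in> topspace X" for x
      proof -
        obtain W where W: "openin X W" "x \<in> W" "\<forall>d\<in>A. \<forall>e\<in>A. C d \<inter> W \<noteq> {} \<and> C e \<inter> W \<noteq> {} \<longrightarrow> d = e"
          using Cd x by (rule bspec[elim_format]) (elim exE conjE)
        have "i = j" if "i \<in> A" "j \<in> A" "U i \<inter> W \<noteq> {}" "U j \<inter> W \<noteq> {}" for i j
        proof -
          have "C i \<inter> W \<noteq> {}" "C j \<inter> W \<noteq> {}" using Uo(3) that by blast+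
          then show ?thesis using W(3) that(1,2) by blast
        qed
        then show ?thesis using W(1,2) by (intro exI[of _ W] conjI) auto
      qed
      have Vdisc: "\<exists>W. openin X W \<and> x \<in> W \<and> (\<forall>i\<in>A. \<forall>j\<in>A. V i \<inter> W \<noteq> {} \<and> V j \<inter> W \<noteq> {} \<longrightarrow> i = j)"
        if x: "x \<in> topspace X" for x
      proof -
        obtain W where W: "openin X W" "x \<in> W" "\<forall>d\<in>B. \<forall>e\<in>B. C' d \<inter> W \<noteq> {} \<and> C' e \<inter> W \<noteq> {} \<longrightarrow> d = e"
          using C'd x by (rule bspec[elim_format]) (elim exE conjE)
        have "i = j" if "i \<in> A" "j \<in> A" "V i \<inter> W \<noteq> {}" "V j \<inter> W \<noteq> {}" for i j
        proof -
          have "C' (f i) \<inter> W \<noteq> {}" "C' (f j) \<inter> W \<noteq> {}" using Vs(1) that by blast+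
          then have "f i = f j" using W(3) fAB that(1,2) by blast
          then show ?thesis using injf that(1,2) by (simp add: inj_on_def)
        qed
        then show ?thesis using W(1,2) by (intro exI[of _ W] conjI) auto
      qed
      have Udisj: "U i \<inter> U j = {}" if "i \<in> A" "j \<in> A" "i \<noteq> j" for i j
      proof (rule ccontr)
        assume "U i \<inter> U j \<noteq> {}"
        then obtain x where x: "x \<in> U i" "x \<in> U j" by blast
        then have "x \<in> topspace X" using Uo(5) that by blast
        then obtain W where W: "openin X W" "x \<in> W" "\<forall>i\<in>A. \<forall>j\<in>A. U i \<inter> W \<noteq> {} \<and> U j \<inter> W \<noteq> {} \<longrightarrow> i = j"
          using Udisc[OF \<open>x \<in> topspace X\<close>] by (elim exE conjE)
        then show False using x that by blast
      qed
      have Vdisj: "V i \<inter> V j = {}" if "i \<in> A" "j \<in> A" "i \<noteq> j" for i j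
      proof (rule ccontr)
        assume "V i \<inter> V j \<noteq> {}"
        then obtain x where x: "x \<in> V i" "x \<in> V j" by blast
        then have "x \<in> topspace X" using VX that by blast
        then obtain W where W: "openin X W" "x \<in> W" "\<forall>i\<in>A. \<forall>j\<in>A. V i \<inter> W \<noteq> {} \<and> V j \<inter> W \<noteq> {} \<longrightarrow> i = j"
          using Vdisc[OF \<open>x \<in> topspace X\<close>] by (elim exE conjE)
        then show False using x that by blast
      qed
      define F where "F = (\<Union>a\<in>A. U a)"
      define G where "G = (\<Union>a\<in>A. V a)"
      have Fo: "openin X F" unfolding F_def using Uo(1) by (auto intro!: openin_Union)
      have Go: "openin X G" unfolding G_def using Vo(1) by (auto intro!: openin_Union)
      have Fc: "closedin X F" unfolding F_def using Uo(2) Udisc by (rule closedin_discrete_Union)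
      have Gc: "closedin X G" unfolding G_def using Vo(2) Vdisc by (rule closedin_discrete_Union)
      have Fne: "F \<noteq> topspace X" using p Uo(4) by (auto simp: F_def)
      have Gne: "G \<noteq> topspace X" using q Vs(2) by (auto simp: G_def)
      have FX: "F \<subseteq> topspace X" and GX: "G \<subseteq> topspace X" using Fo Go openin_subset by auto
      have "\<exists>g g'. homeomorphic_maps (subtopology X F) (subtopology X G) g g' \<and> (\<forall>i\<in>A. \<forall>x\<in>U i. g x = H i x)"
      proof (rule paste_homeo[where P=U and Q=V and \<psi>=Hi])
        fix i assume i: "i \<in> A"
        have "U i \<subseteq> F" using i by (auto simp: F_def)
        then show "openin (subtopology X F) (U i)"
          using openin_subtopology_Int2[OF Uo(1)[OF i], of F] by (simp add: Int_absorb1)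
        have "V i \<subseteq> G" using i by (auto simp: G_def)
        then show "openin (subtopology X G) (V i)"
          using openin_subtopology_Int2[OF Vo(1)[OF i], of G] by (simp add: Int_absorb1)
        have e1: "subtopology (subtopology X F) (U i) = subtopology X (U i)"
          using \<open>U i \<subseteq> F\<close> by (simp add: subtopology_subtopology Int_absorb1)
        have e2: "subtopology (subtopology X G) (V i) = subtopology X (V i)"
          using \<open>V i \<subseteq> G\<close> by (simp add: subtopology_subtopology Int_absorb1)
        have "H i ` (topspace X \<inter> U i) = topspace X \<inter> V i"
          using Uo(5)[OF i] VX[OF i] by (auto simp: V_def)
        then show "homeomorphic_maps (subtopology (subtopology X F) (U i)) (subtopology (subtopology X G) (V i)) (H i) (Hi i)"
          unfolding e1 e2 using H i homeomorphic_maps_subtopologies by blast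
      next
        fix i j assume "i \<in> A" "j \<in> A" "i \<noteq> j"
        then show "U i \<inter> U j = {}" "V i \<inter> V j = {}" using Udisj Vdisj by auto
      next
        show "topspace (subtopology X F) \<subseteq> (\<Union>i\<in>A. U i)" by (auto simp: F_def)
        show "topspace (subtopology X G) \<subseteq> (\<Union>i\<in>A. V i)" by (auto simp: G_def)
      qed
      then obtain g g' where gg: "homeomorphic_maps (subtopology X F) (subtopology X G) g g'"
        and gH: "\<forall>i\<in>A. \<forall>x\<in>U i. g x = H i x" by blast
      have "subtopology X (topspace X - F) homeomorphic_space subtopology X (topspace X - G)"
        using pD Fo Fc Fne Go Gc Gne gg homeomorphic_maps_imp_homeomorphic_space
        unfolding property_D_def by blast
      then obtain k k' where kk: "homeomorphic_maps (subtopology X (topspace X - F)) (subtopology X (topspace X - G)) k k'"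
        unfolding homeomorphic_space_def by blast
      define P where "P b = (if b then F else topspace X - F)" for b
      define Q where "Q b = (if b then G else topspace X - G)" for b
      define \<phi> where "\<phi> b = (if b then g else k)" for b
      define \<psi> where "\<psi> b = (if b then g' else k')" for b
      have "\<exists>h h'. homeomorphic_maps X X h h' \<and> (\<forall>i\<in>UNIV. \<forall>x\<in>P i. h x = \<phi> i x)"
      proof (rule paste_homeo[where P=P and Q=Q and \<psi>=\<psi>])
        fix i :: bool
        show "openin X (P i)" using Fo Fc by (auto simp: P_def)
        show "openin X (Q i)" using Go Gc by (auto simp: Q_def)
        show "homeomorphic_maps (subtopology X (P i)) (subtopology X (Q i)) (\<phi> i) (\<psi> i)"
          using gg kk by (auto simp: P_def Q_def \<phi>_def \<psi>_def)
      next
        fix i j :: bool assume "i \<noteq> j"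
        then show "P i \<inter> P j = {}" "Q i \<inter> Q j = {}" by (cases i; cases j; auto simp: P_def Q_def)+
      next
        show "topspace X \<subseteq> (\<Union>i\<in>UNIV. P i)" by (auto simp: P_def)
        show "topspace X \<subseteq> (\<Union>i\<in>UNIV. Q i)" by (auto simp: Q_def)
      qed
      then obtain h h' where hh: "homeomorphic_maps X X h h'" and hP: "\<forall>i\<in>UNIV. \<forall>x\<in>P i. h x = \<phi> i x"
        by blast
      have "h a = f a" if a: "a \<in> A" for a
      proof -
        have "a \<in> P True" using a Uo(6)[OF a] by (auto simp: P_def F_def)
        then have "h a = g a" using hP by (simp add: \<phi>_def)
        also have "\<dots> = H a a" using gH a Uo(6)[OF a] by blast
        also have "\<dots> = f a" using H a by blast
        finally show ?thesis .
      qed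
      then show ?thesis using hh homeomorphic_map_maps by blast
    qed
  qed
qed

end
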